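(* Let $k\ge4$ be an integer and $\eta\in[\eta_{k+1},\pi/k)$. If $\arg z_{2k-1}\in(0,\eta]$, then $z_{2k}\in\triangle(0,z_0,1)$, $z_{2k+1}\in\triangle(0,z_1,z_0)$, $w_{2k}\in\triangle(1,w_0,a)$ and $w_{2k+1}\in\triangle(1,w_1,w_0)$. If $\arg z_{2k-1}\in(\eta,2\eta]$, then $z_{2k}\in\triangle(0,1,z_{2k-1})$, $z_{2k+1}\in\triangle(0,z_0,1)$, $w_{2k}\in\triangle(1,a,w_{2k-1})$ and $w_{2k+1}\in\triangle(1,w_0,a)$.
   Context: For $\eta\in(0,\pi/3)$ let $a=\frac{e^{-i\eta}}{2\cos\eta}$, $c=\frac{1}{1-|a|^4}$, and for integers $j\ge0$ put $z_j=ca^{j+1}$, $w_j=1-c|a|^2a^j$. $\arg$ takes values in $[0,2\pi)$ (under the hypotheses $\arg z_{2k-1}=2\pi-2k\eta\in(0,2\eta]$). For integers $k\ge1$ let $\Phi_k(\eta)=(1-|a|^4)\sin((k-1)\eta)-|a|^3\sin((k-2)\eta)+|a|^k\sin\eta$; for each $k\ge4$, $\Phi_k$ has a unique zero in $(\pi/k,\pi/(k-1))$, denoted $\eta_k$. $\triangle(u,v,w)$ is the closed solid triangle with vertices $u,v,w$. *)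

theory Defs
  imports "HOL-Analysis.Analysis"
begin

definition aa :: "real \<Rightarrow> complex" where
  "aa \<eta> = cis (- \<eta>) / complex_of_real (2 * cos \<eta>)"

definition cc :: "real \<Rightarrow> real" where
  "cc \<eta> = 1 / (1 - cmod (aa \<eta>) ^ 4)"

definition zz :: "real \<Rightarrow> nat \<Rightarrow> complex" where
  "zz \<eta> j = complex_of_real (cc \<eta>) * aa \<eta> ^ (j + 1)"

definition ww :: "real \<Rightarrow> nat \<Rightarrow> complex" where
  "ww \<eta> j = 1 - complex_of_real (cc \<eta> * cmod (aa \<eta>) ^ 2) * aa \<eta> ^ j"

definition arg2 :: "complex \<Rightarrow> real" where
  "arg2 z = (if Arg z < 0 then Arg z + 2 * pi else Arg z)"

definition Phi :: "nat \<Rightarrow> real \<Rightarrow> real" where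
  "Phi k \<eta> = (1 - cmod (aa \<eta>) ^ 4) * sin ((real k - 1) * \<eta>)
             - cmod (aa \<eta>) ^ 3 * sin ((real k - 2) * \<eta>)
             + cmod (aa \<eta>) ^ k * sin \<eta>"

text \<open>The unique zero of Phi k in (pi/k, pi/(k-1)), for k >= 4.\<close>
definition eta_k :: "nat \<Rightarrow> real" where
  "eta_k k = (THE \<eta>. pi / real k < \<eta> \<and> \<eta> < pi / (real k - 1) \<and> Phi k \<eta> = 0)"

definition tri :: "complex \<Rightarrow> complex \<Rightarrow> complex \<Rightarrow> complex set" where
  "tri u v w = convex hull {u, v, w}"

end

theory Submission imports Defs begin

lemma core:
  fixes x :: complex
  assumes e: "0 < e" "e < pi/2" and t: "0 \<le> t" "t \<le> e" and rho: "0 \<le> \<rho>"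
    and R: "0 < R1" "0 < R2" and cond: "\<rho>/R1 + \<rho>/R2 \<le> 1"
  shows "x + of_real \<rho> * cis (g + t) \<in> tri x (x + of_real R1 * cis g) (x + of_real R2 * cis (g + e))"
proof -
  have se: "sin e > 0" using e by (intro sin_gt_zero) auto
  have s1: "sin t \<le> sin e" using e t by (intro sin_monotone_2pi_le) auto
  have s2: "sin (e - t) \<le> sin e" using e t by (intro sin_monotone_2pi_le) auto
  have s1p: "sin t \<ge> 0" using e t by (intro sin_ge_zero) auto
  have s2p: "sin (e - t) \<ge> 0" using e t by (intro sin_ge_zero) auto
  define al where "al = \<rho> * sin (e - t) / (R1 * sin e)"
  define be where "be = \<rho> * sin t / (R2 * sin e)"
  have al0: "al \<ge> 0" unfolding al_def using rho R se s2p by simp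
  have be0: "be \<ge> 0" unfolding be_def using rho R se s1p by simp
  have "al \<le> \<rho> / R1" unfolding al_def using rho R se s2
    by (simp add: divide_simps mult_left_mono)
  moreover have "be \<le> \<rho> / R2" unfolding be_def using rho R se s1
    by (simp add: divide_simps mult_left_mono)
  ultimately have sum: "al + be \<le> 1" using cond by linarith
  have id: "sin (e - t) + sin t * cis e = sin e * cis t"
    by (simp add: complex_eq_iff sin_diff algebra_simps)
  have "of_real al * (of_real R1 * cis g) + of_real be * (of_real R2 * cis (g + e))
        = of_real \<rho> / of_real (sin e) * cis g * (sin (e - t) + sin t * cis e)"
    unfolding al_def be_def using R se by (simp add: field_simps cis_mult[symmetric])
  also have "\<dots> = of_real \<rho> * cis (g + t)" using se
    by (simp only: id) (simp add: field_simps cis_mult[symmetric])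
  finally have eq: "of_real al * (of_real R1 * cis g) + of_real be * (of_real R2 * cis (g + e)) = of_real \<rho> * cis (g + t)" .
  have "x + of_real \<rho> * cis (g + t) = (1 - al - be) *\<^sub>R x + al *\<^sub>R (x + of_real R1 * cis g) + be *\<^sub>R (x + of_real R2 * cis (g + e))"
    using eq[symmetric] by (simp add: scaleR_conv_of_real algebra_simps)
  then show ?thesis unfolding tri_def convex_hull_3 using al0 be0 sum
    by (intro CollectI exI[of _ "1 - al - be"] exI[of _ al] exI[of _ be]) auto
qed

lemma core':
  fixes x :: complex
  assumes "P = x + of_real \<rho> * cis (g + t)" "U = x + of_real Ra * cis g" "V = x + of_real Rb * cis (g + e)"
    and "0 < e" "e < pi/2" "0 \<le> t" "t \<le> e" "0 \<le> \<rho>"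
    and "0 < Ra" "0 < Rb" "\<rho>/Ra + \<rho>/Rb \<le> 1"
  shows "P \<in> tri x U V"
  using core[of e t \<rho> Ra Rb x g] assms by simp

lemma cis_per: "y = x + 2*pi \<Longrightarrow> cis y = cis x"
  by (simp add: cis_mult[symmetric])

lemma aa_pow:
  assumes "cos e > 0"
  shows "aa e ^ n = of_real ((1/(2*cos e))^n) * cis (- (real n * e))"
proof -
  have "aa e ^ n = cis (-e) ^ n / of_real (2*cos e) ^ n" unfolding aa_def by (simp add: power_divide)
  also have "\<dots> = cis (- (real n * e)) / of_real (2*cos e) ^ n" by (simp only: Complex.DeMoivre mult_minus_right)
  finally show ?thesis by (simp add: power_divide)
qed

lemma cmod_aa:
  assumes "cos e > 0"
  shows "cmod (aa e) = 1/(2*cos e)"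
  unfolding aa_def using assms by (simp add: norm_divide)

lemma arg2_lem:
  assumes "0 < s" "-2*pi < t" "t < 0"
  shows "arg2 (of_real s * cis t) = t + 2*pi"
proof (cases "-pi < t")
  case True
  then have "Arg (cis t) = t" using assms by (intro Arg_cis) auto
  then show ?thesis unfolding arg2_def using assms Arg_times_of_real[OF assms(1)] by simp
next
  case False
  have c: "cis t = cis (t + 2*pi)" by (rule sym, rule cis_per) simp
  have "Arg (cis (t + 2*pi)) = t + 2*pi" using assms False by (intro Arg_cis) auto
  moreover have "Arg (of_real s * cis t) = Arg (cis (t + 2*pi))" unfolding c by (rule Arg_times_of_real[OF assms(1)])
  ultimately show ?thesis unfolding arg2_def using assms False by simp
qed

theorem lemma6p5:
  fixes k :: nat and \<eta> :: real
  assumes "k \<ge> 4"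
    and "eta_k (k + 1) \<le> \<eta>" and "\<eta> < pi / real k"
  shows "(0 < arg2 (zz \<eta> (2*k - 1)) \<and> arg2 (zz \<eta> (2*k - 1)) \<le> \<eta> \<longrightarrow>
            zz \<eta> (2*k) \<in> tri 0 (zz \<eta> 0) 1 \<and>
            zz \<eta> (2*k + 1) \<in> tri 0 (zz \<eta> 1) (zz \<eta> 0) \<and>
            ww \<eta> (2*k) \<in> tri 1 (ww \<eta> 0) (aa \<eta>) \<and>
            ww \<eta> (2*k + 1) \<in> tri 1 (ww \<eta> 1) (ww \<eta> 0))
       \<and> (\<eta> < arg2 (zz \<eta> (2*k - 1)) \<and> arg2 (zz \<eta> (2*k - 1)) \<le> 2 * \<eta> \<longrightarrow>
            zz \<eta> (2*k) \<in> tri 0 1 (zz \<eta> (2*k - 1)) \<and>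
            zz \<eta> (2*k + 1) \<in> tri 0 (zz \<eta> 0) 1 \<and>
            ww \<eta> (2*k) \<in> tri 1 (aa \<eta>) (ww \<eta> (2*k - 1)) \<and>
            ww \<eta> (2*k + 1) \<in> tri 1 (ww \<eta> 0) (aa \<eta>))"
proof -
  define r where "r = 1/(2*cos \<eta>)"
  define c where "c = 1/(1 - r^4)"
  define T where "T = 2*pi - 2*real k*\<eta>"
  have k4: "real k \<ge> 4" using assms(1) by simp
  have eps: "\<eta> < pi/4"
  proof -
    have "pi / real k \<le> pi / 4" using k4 by (intro divide_left_mono) auto
    then show ?thesis using assms(3) by linarith
  qed
  have Tbd: "2*real k*\<eta> < 2*pi" using assms(3) k4 by (simp add: field_simps)
  show ?thesis
  proof (cases "\<eta> > 0")
    case False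
    have "arg2 z \<ge> 0" for z unfolding arg2_def using Arg_bounded[of z] by auto
    then have "arg2 (zz \<eta> (2*k - 1)) \<ge> 0" .
    then show ?thesis using False by (intro conjI impI; elim conjE; linarith)
  next
    case pos: True
    have cpos: "cos \<eta> > 0" using pos eps by (intro cos_gt_zero) auto
    have rpos: "r > 0" unfolding r_def using cpos by simp
    have c2: "cos (2*\<eta>) > 0" using pos eps by (intro cos_gt_zero) auto
    have "2*(cos \<eta>)^2 - 1 > 0" using c2 by (simp add: cos_double_cos)
    then have "(2*cos \<eta>)^2 > 2" by (simp add: power2_eq_square)
    then have r2: "r^2 < 1/2" unfolding r_def using cpos by (simp add: power_divide divide_simps)
    have rr: "r*r < 1/2" using r2 by (simp add: power2_eq_square)
    have r1: "r < 1" using rr rpos mult_mono[of 1 r 1 r] by linarith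
    have r4e: "r^4 = (r*r)*(r*r)" by (simp add: power4_eq_xxxx)
    have r4: "r^4 < 1/4" unfolding r4e using rr rpos
      using mult_strict_mono[of "r*r" "1/2" "r*r" "1/2"] by simp
    have r4': "r^4 \<ge> 0" using rpos by simp
    have cge: "c \<ge> 1" and cle: "c \<le> 4/3" unfolding c_def using r4 r4' by (auto simp: field_simps)
    define p where "p = r^(2*k)"
    have p0: "p \<ge> 0" unfolding p_def using rpos by simp
    have p16: "p \<le> 1/16"
    proof -
      have "p = (r^2)^k" unfolding p_def by (simp add: power_mult)
      also have "\<dots> \<le> (r^2)^4" using r2 rpos assms(1) by (intro power_decreasing) auto
      also have "\<dots> \<le> (1/2)^4" using r2 rpos by (intro power_mono) auto
      finally show ?thesis by (simp add: power_divide)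
    qed
    have cmodr: "cmod (aa \<eta>) = r" unfolding r_def using cmod_aa[OF cpos] .
    have ccdef: "cc \<eta> = c" unfolding cc_def c_def cmodr ..
    have zzf: "zz \<eta> j = of_real (c * r^(j+1)) * cis (- (real (j+1) * \<eta>))" for j
      unfolding zz_def ccdef aa_pow[OF cpos] r_def by simp
    have wwf: "ww \<eta> j = 1 + of_real (c * r^(j+2)) * cis (pi - real j * \<eta>)" for j
    proof -
      have "cis (pi - real j * \<eta>) = - cis (- (real j * \<eta>))"
        using cis_mult[of pi "- (real j * \<eta>)"] by simp
      then show ?thesis unfolding ww_def ccdef cmodr aa_pow[OF cpos] r_def[symmetric]
        by (simp add: power_add power2_eq_square algebra_simps)
    qed
    have aaf: "aa \<eta> = 1 + of_real r * cis (pi + \<eta>)"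
    proof -
      have "cis (pi + \<eta>) = - cis \<eta>" using cis_mult[of pi \<eta>] by simp
      then show ?thesis unfolding aa_def r_def using cpos
        by (simp add: complex_eq_iff field_simps cis.sel)
    qed
    have argz: "arg2 (zz \<eta> (2*k - 1)) = T"
    proof -
      have "zz \<eta> (2*k - 1) = of_real (c * r^(2*k)) * cis (- (2*real k * \<eta>))"
        unfolding zzf using assms(1) by (simp add: of_nat_diff)
      also have "arg2 \<dots> = - (2*real k * \<eta>) + 2*pi"
        using cge rpos Tbd pos k4 by (intro arg2_lem) auto
      finally show ?thesis unfolding T_def by simp
    qed
    have main: "r^(2*k+j) = p * r^j" for j unfolding p_def by (simp add: power_add)
    have p0: "p > 0" unfolding p_def using rpos by simp
    have r12: "r \<le> 12/13" using rr rpos mult_mono[of "12/13" r "12/13" r] by linarith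
    have cp: "c*p \<le> 1/12" using cle p16 p0 cge using mult_mono[of c "4/3" p "1/16"] by simp
    have cp0: "c*p \<ge> 0" using p0 cge by simp
    have cpr: "c*p*r \<le> 1/12" using cp mult_left_mono[OF less_imp_le[OF r1] cp0] by simp
    have pr: "p*r \<le> 1/16" using p16 mult_left_mono[OF less_imp_le[OF r1] less_imp_le[OF p0]] by simp
    have cprr: "c*p*r^2 \<le> 1/12" using cpr r1 rpos p0 cge
    proof -
      have "r^2 \<le> 1" using r2 by simp
      from mult_left_mono[OF this cp0] show ?thesis using cp by simp
    qed
    have B1: "p + c*p*r \<le> 1" using p16 cpr by linarith
    have B2: "p + p*r \<le> 1" using p16 pr by linarith
    have B3: "c*p*r + r \<le> 1" using mult_right_mono[OF cp less_imp_le[OF rpos]] r12 by linarith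
    have B4: "p*r + c*p*r^2 \<le> 1" using pr cprr by linarith
    have cpos': "c > 0" using cge by linarith
    have eps2: "\<eta> < pi/2" using eps pi_gt_zero by linarith
    have P1: "cis (-\<eta> + T) = cis (-(real (2*k+1)*\<eta>))" by (rule cis_per) (simp add: T_def algebra_simps)
    have P2: "cis (-(2*\<eta>) + T) = cis (-(real (2*k+1+1)*\<eta>))" by (rule cis_per) (simp add: T_def algebra_simps)
    have P3: "cis (pi + T) = cis (pi - real (2*k)*\<eta>)" by (rule cis_per) (simp add: T_def algebra_simps)
    have P4: "cis (pi - \<eta> + T) = cis (pi - real (2*k+1)*\<eta>)" by (rule cis_per) (simp add: T_def algebra_simps)
    have P5: "cis (0 + (T - \<eta>)) = cis (-(real (2*k+1)*\<eta>))" by (rule cis_per) (simp add: T_def algebra_simps)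
    have P5': "cis (0 + T) = cis (-(real (2*k)*\<eta>))" by (intro cis_per) (simp add: T_def algebra_simps)
    have P6: "cis (-\<eta> + (T - \<eta>)) = cis (-(real (2*k+1+1)*\<eta>))" by (rule cis_per) (simp add: T_def algebra_simps)
    have P7: "cis (pi + \<eta> + (T - \<eta>)) = cis (pi - real (2*k)*\<eta>)" by (rule cis_per) (simp add: T_def algebra_simps)
    have P7': "cis (pi + \<eta> + T) = cis (pi - real (2*k-1)*\<eta>)" using assms(1) by (intro cis_per) (simp add: T_def algebra_simps of_nat_diff)
    have P8: "cis (pi + (T - \<eta>)) = cis (pi - real (2*k+1)*\<eta>)" by (rule cis_per) (simp add: T_def algebra_simps)
    have mk: "2*k - 1 + 1 = 2*k" "2*k - 1 + 2 = 2*k+1" "2*k+1+2 = 2*k+3" "2*k+1+1 = 2*k+2" using assms(1) by simp_all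
    show ?thesis
    proof (intro conjI impI; elim conjE)
      assume h: "0 < arg2 (zz \<eta> (2*k - 1))" "arg2 (zz \<eta> (2*k - 1)) \<le> \<eta>"
      then have T0: "0 \<le> T" "T \<le> \<eta>" using argz by auto
      show "zz \<eta> (2*k) \<in> tri 0 (zz \<eta> 0) 1"
        apply (rule core'[where \<rho>="c*r^(2*k+1)" and g="-\<eta>" and t="T" and e="\<eta>" and Ra="c*r" and Rb="1"])
        subgoal by ((simp only: zzf wwf mk P1)?; simp add: power2_eq_square power3_eq_cube)
        subgoal by ((simp only: zzf wwf aaf mk)?; simp add: power2_eq_square power3_eq_cube)
        subgoal by ((simp only: zzf wwf aaf mk P1)?; simp add: power2_eq_square power3_eq_cube)
        subgoal using pos eps2 T0 rpos cpos' p0 by simp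
        subgoal using pos eps2 T0 rpos cpos' p0 by simp
        subgoal using pos eps2 T0 rpos cpos' p0 by simp
        subgoal using pos eps2 T0 rpos cpos' p0 by simp
        subgoal using pos eps2 T0 rpos cpos' p0 by simp
        subgoal using pos eps2 T0 rpos cpos' p0 by simp
        subgoal using pos eps2 T0 rpos cpos' p0 by simp
        subgoal
        proof -
          have "(c*r^(2*k+1))/(c*r) + (c*r^(2*k+1))/(1) = p + c*p*r"
            unfolding main p_def[symmetric] using rpos cpos' p0 by (simp add: field_simps power2_eq_square power3_eq_cube)
          then show ?thesis using B1 by simp
        qed
        done
      show "zz \<eta> (2*k+1) \<in> tri 0 (zz \<eta> 1) (zz \<eta> 0)"
        apply (rule core'[where \<rho>="c*r^(2*k+2)" and g="-(2*\<eta>)" and t="T" and e="\<eta>" and Ra="c*r^2" and Rb="c*r"])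
        subgoal by ((simp only: zzf wwf mk P2)?; simp add: power2_eq_square power3_eq_cube)
        subgoal by ((simp only: zzf wwf aaf mk)?; simp add: power2_eq_square power3_eq_cube)
        subgoal by ((simp only: zzf wwf aaf mk P2)?; simp add: power2_eq_square power3_eq_cube)
        subgoal using pos eps2 T0 rpos cpos' p0 by simp
        subgoal using pos eps2 T0 rpos cpos' p0 by simp
        subgoal using pos eps2 T0 rpos cpos' p0 by simp
        subgoal using pos eps2 T0 rpos cpos' p0 by simp
        subgoal using pos eps2 T0 rpos cpos' p0 by simp
        subgoal using pos eps2 T0 rpos cpos' p0 by simp
        subgoal using pos eps2 T0 rpos cpos' p0 by simp
        subgoal
        proof -
          have "(c*r^(2*k+2))/(c*r^2) + (c*r^(2*k+2))/(c*r) = p + p*r"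
            unfolding main p_def[symmetric] using rpos cpos' p0 by (simp add: field_simps power2_eq_square power3_eq_cube)
          then show ?thesis using B2 by simp
        qed
        done
      show "ww \<eta> (2*k) \<in> tri 1 (ww \<eta> 0) (aa \<eta>)"
        apply (rule core'[where \<rho>="c*r^(2*k+2)" and g="pi" and t="T" and e="\<eta>" and Ra="c*r^2" and Rb="r"])
        subgoal by ((simp only: zzf wwf mk P3)?; simp add: power2_eq_square power3_eq_cube)
        subgoal by ((simp only: zzf wwf aaf mk)?; simp add: power2_eq_square power3_eq_cube)
        subgoal by ((simp only: zzf wwf aaf mk P3)?; simp add: power2_eq_square power3_eq_cube)
        subgoal using pos eps2 T0 rpos cpos' p0 by simp
        subgoal using pos eps2 T0 rpos cpos' p0 by simp
        subgoal using pos eps2 T0 rpos cpos' p0 by simp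
        subgoal using pos eps2 T0 rpos cpos' p0 by simp
        subgoal using pos eps2 T0 rpos cpos' p0 by simp
        subgoal using pos eps2 T0 rpos cpos' p0 by simp
        subgoal using pos eps2 T0 rpos cpos' p0 by simp
        subgoal
        proof -
          have "(c*r^(2*k+2))/(c*r^2) + (c*r^(2*k+2))/(r) = p + c*p*r"
            unfolding main p_def[symmetric] using rpos cpos' p0 by (simp add: field_simps power2_eq_square power3_eq_cube)
          then show ?thesis using B1 by simp
        qed
        done
      show "ww \<eta> (2*k+1) \<in> tri 1 (ww \<eta> 1) (ww \<eta> 0)"
        apply (rule core'[where \<rho>="c*r^(2*k+3)" and g="pi-\<eta>" and t="T" and e="\<eta>" and Ra="c*r^3" and Rb="c*r^2"])
        subgoal by ((simp only: zzf wwf mk P4)?; simp add: power2_eq_square power3_eq_cube)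
        subgoal by ((simp only: zzf wwf aaf mk)?; simp add: power2_eq_square power3_eq_cube)
        subgoal by ((simp only: zzf wwf aaf mk P4)?; simp add: power2_eq_square power3_eq_cube)
        subgoal using pos eps2 T0 rpos cpos' p0 by simp
        subgoal using pos eps2 T0 rpos cpos' p0 by simp
        subgoal using pos eps2 T0 rpos cpos' p0 by simp
        subgoal using pos eps2 T0 rpos cpos' p0 by simp
        subgoal using pos eps2 T0 rpos cpos' p0 by simp
        subgoal using pos eps2 T0 rpos cpos' p0 by simp
        subgoal using pos eps2 T0 rpos cpos' p0 by simp
        subgoal
        proof -
          have "(c*r^(2*k+3))/(c*r^3) + (c*r^(2*k+3))/(c*r^2) = p + p*r"
            unfolding main p_def[symmetric] using rpos cpos' p0 by (simp add: field_simps power2_eq_square power3_eq_cube)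
          then show ?thesis using B2 by simp
        qed
        done
    next
      assume h: "\<eta> < arg2 (zz \<eta> (2*k - 1))" "arg2 (zz \<eta> (2*k - 1)) \<le> 2*\<eta>"
      then have T0: "\<eta> \<le> T" "T \<le> 2*\<eta>" using argz by auto
      have T2: "T < pi/2" using T0 eps pi_gt_zero by linarith
      show "zz \<eta> (2*k) \<in> tri 0 1 (zz \<eta> (2*k - 1))"
        apply (rule core'[where \<rho>="c*r^(2*k+1)" and g="0" and t="T-\<eta>" and e="T" and Ra="1" and Rb="c*r^(2*k)"])
        subgoal by ((simp only: zzf wwf mk P5 P5')?; simp add: power2_eq_square power3_eq_cube)
        subgoal by ((simp only: zzf wwf aaf mk)?; simp add: power2_eq_square power3_eq_cube)
        subgoal by ((simp only: zzf wwf aaf mk P5 P5')?; simp add: power2_eq_square power3_eq_cube)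
        subgoal using pos T2 T0 rpos cpos' p0 by simp
        subgoal using pos T2 T0 rpos cpos' p0 by simp
        subgoal using pos T2 T0 rpos cpos' p0 by simp
        subgoal using pos T2 T0 rpos cpos' p0 by simp
        subgoal using pos T2 T0 rpos cpos' p0 by simp
        subgoal using pos T2 T0 rpos cpos' p0 by simp
        subgoal using pos T2 T0 rpos cpos' p0 by simp
        subgoal
        proof -
          have "(c*r^(2*k+1))/(1) + (c*r^(2*k+1))/(c*r^(2*k)) = c*p*r + r"
            unfolding main p_def[symmetric] using rpos cpos' p0 by (simp add: field_simps power2_eq_square power3_eq_cube)
          then show ?thesis using B3 by simp
        qed
        done
      show "zz \<eta> (2*k+1) \<in> tri 0 (zz \<eta> 0) 1"
        apply (rule core'[where \<rho>="c*r^(2*k+2)" and g="-\<eta>" and t="T-\<eta>" and e="\<eta>" and Ra="c*r" and Rb="1"])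
        subgoal by ((simp only: zzf wwf mk P6)?; simp add: power2_eq_square power3_eq_cube)
        subgoal by ((simp only: zzf wwf aaf mk)?; simp add: power2_eq_square power3_eq_cube)
        subgoal by ((simp only: zzf wwf aaf mk P6)?; simp add: power2_eq_square power3_eq_cube)
        subgoal using pos eps2 T0 rpos cpos' p0 by simp
        subgoal using pos eps2 T0 rpos cpos' p0 by simp
        subgoal using pos eps2 T0 rpos cpos' p0 by simp
        subgoal using pos eps2 T0 rpos cpos' p0 by simp
        subgoal using pos eps2 T0 rpos cpos' p0 by simp
        subgoal using pos eps2 T0 rpos cpos' p0 by simp
        subgoal using pos eps2 T0 rpos cpos' p0 by simp
        subgoal
        proof -
          have "(c*r^(2*k+2))/(c*r) + (c*r^(2*k+2))/(1) = p*r + c*p*r^2"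
            unfolding main p_def[symmetric] using rpos cpos' p0 by (simp add: field_simps power2_eq_square power3_eq_cube)
          then show ?thesis using B4 by simp
        qed
        done
      show "ww \<eta> (2*k) \<in> tri 1 (aa \<eta>) (ww \<eta> (2*k - 1))"
        apply (rule core'[where \<rho>="c*r^(2*k+2)" and g="pi+\<eta>" and t="T-\<eta>" and e="T" and Ra="r" and Rb="c*r^(2*k+1)"])
        subgoal by ((simp only: zzf wwf mk P7 P7')?; simp add: power2_eq_square power3_eq_cube)
        subgoal by ((simp only: zzf wwf aaf mk)?; simp add: power2_eq_square power3_eq_cube)
        subgoal by ((simp only: zzf wwf aaf mk P7 P7')?; simp add: power2_eq_square power3_eq_cube)
        subgoal using pos T2 T0 rpos cpos' p0 by simp
        subgoal using pos T2 T0 rpos cpos' p0 by simp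
        subgoal using pos T2 T0 rpos cpos' p0 by simp
        subgoal using pos T2 T0 rpos cpos' p0 by simp
        subgoal using pos T2 T0 rpos cpos' p0 by simp
        subgoal using pos T2 T0 rpos cpos' p0 by simp
        subgoal using pos T2 T0 rpos cpos' p0 by simp
        subgoal
        proof -
          have "(c*r^(2*k+2))/(r) + (c*r^(2*k+2))/(c*r^(2*k+1)) = c*p*r + r"
            unfolding main p_def[symmetric] using rpos cpos' p0 by (simp add: field_simps power2_eq_square power3_eq_cube)
          then show ?thesis using B3 by simp
        qed
        done
      show "ww \<eta> (2*k+1) \<in> tri 1 (ww \<eta> 0) (aa \<eta>)"
        apply (rule core'[where \<rho>="c*r^(2*k+3)" and g="pi" and t="T-\<eta>" and e="\<eta>" and Ra="c*r^2" and Rb="r"])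
        subgoal by ((simp only: zzf wwf mk P8)?; simp add: power2_eq_square power3_eq_cube)
        subgoal by ((simp only: zzf wwf aaf mk)?; simp add: power2_eq_square power3_eq_cube)
        subgoal by ((simp only: zzf wwf aaf mk P8)?; simp add: power2_eq_square power3_eq_cube)
        subgoal using pos eps2 T0 rpos cpos' p0 by simp
        subgoal using pos eps2 T0 rpos cpos' p0 by simp
        subgoal using pos eps2 T0 rpos cpos' p0 by simp
        subgoal using pos eps2 T0 rpos cpos' p0 by simp
        subgoal using pos eps2 T0 rpos cpos' p0 by simp
        subgoal using pos eps2 T0 rpos cpos' p0 by simp
        subgoal using pos eps2 T0 rpos cpos' p0 by simp
        subgoal
        proof -
          have "(c*r^(2*k+3))/(c*r^2) + (c*r^(2*k+3))/(r) = p*r + c*p*r^2"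
            unfolding main p_def[symmetric] using rpos cpos' p0 by (simp add: field_simps power2_eq_square power3_eq_cube)
          then show ?thesis using B4 by simp
        qed
        done
    qed
  qed
qed

end
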